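(* For $n$ large enough, there are linear trifferent codes of length $n$ and size at least $\tfrac13(9/5)^{n/4}$.
   Context: A linear trifferent code of length $n$ is a linear subspace $C\subseteq\mathbb{F}_3^n$ such that for any three distinct $x,y,z\in C$ there is a coordinate $i$ with $\{x_i,y_i,z_i\}=\mathbb{F}_3$. *)

theory Defs
  imports Complex_Main "HOL-Library.Numeral_Type"
begin

text \<open>The field F_3 is the type 3 (integers mod 3, a comm_ring_1).
  Words of length n are functions nat => 3 vanishing outside {0..<n}.\<close>

definition F3_words :: "nat \<Rightarrow> (nat \<Rightarrow> 3) set" where
  "F3_words n = {x. \<forall>i\<ge>n. x i = 0}"

definition linear_code :: "nat \<Rightarrow> (nat \<Rightarrow> 3) set \<Rightarrow> bool" where
  "linear_code n C \<longleftrightarrow> C \<subseteq> F3_words n \<and> (\<lambda>i. 0) \<in> C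
     \<and> (\<forall>x\<in>C. \<forall>y\<in>C. (\<lambda>i. x i + y i) \<in> C)
     \<and> (\<forall>c::3. \<forall>x\<in>C. (\<lambda>i. c * x i) \<in> C)"

definition trifferent :: "nat \<Rightarrow> (nat \<Rightarrow> 3) set \<Rightarrow> bool" where
  "trifferent n C \<longleftrightarrow> (\<forall>x\<in>C. \<forall>y\<in>C. \<forall>z\<in>C. x \<noteq> y \<and> y \<noteq> z \<and> x \<noteq> z
      \<longrightarrow> (\<exists>i<n. {x i, y i, z i} = (UNIV :: 3 set)))"

definition linear_trifferent_code :: "nat \<Rightarrow> (nat \<Rightarrow> 3) set \<Rightarrow> bool" where
  "linear_trifferent_code n C \<longleftrightarrow> linear_code n C \<and> trifferent n C"

end

theory Submission
  imports Defs "HOL-Library.FuncSet"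
begin

lemma three_cases: "(x::3) = 0 \<or> x = 1 \<or> x = 2"
proof (cases x rule: bit1_cases)
  case (of_int z)
  then have "z < 3" by simp
  with of_int have "z = 0 \<or> z = 1 \<or> z = 2" by linarith
  then show ?thesis using of_int by auto
qed

lemma three_exhaust: obtains "(x::3) = 0" | "x = 1" | "x = 2" using three_cases by blast

lemma nz_sq: "(u::3) \<noteq> 0 \<Longrightarrow> u * u = 1"
  by (cases u rule: three_exhaust) auto

lemma univ3: "(e::3) \<noteq> 0 \<Longrightarrow> {x, x + e, x - e} = UNIV"
proof -
  assume e: "e \<noteq> 0"
  have "y \<in> {x, x + e, x - e}" for y
    using e by (cases x rule: three_exhaust; cases y rule: three_exhaust; cases e rule: three_exhaust) auto
  then show ?thesis by auto
qed

definition tet :: "nat \<Rightarrow> 3 \<Rightarrow> 3 \<Rightarrow> 3" where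
  "tet t x y = (if t = 0 then x else if t = 1 then y else if t = 2 then x + y else x - y)"

lemma tetra_disj: "(u1 \<noteq> 0 \<or> u2 \<noteq> 0) \<Longrightarrow> (v1 \<noteq> 0 \<or> v2 \<noteq> 0) \<Longrightarrow> (u1 \<noteq> v1 \<or> u2 \<noteq> v2) \<Longrightarrow>
   (u1 \<noteq> 0 \<and> v1 = - u1) \<or> (u2 \<noteq> 0 \<and> v2 = - u2) \<or> (u1 + u2 \<noteq> 0 \<and> v1 + v2 = - (u1 + u2))
   \<or> (u1 - u2 \<noteq> 0 \<and> v1 - v2 = - (u1 - u2::3))"
  by (cases u1 rule: three_exhaust; cases u2 rule: three_exhaust; cases v1 rule: three_exhaust;
      cases v2 rule: three_exhaust; simp)

lemma tetra: assumes "(u1 \<noteq> 0 \<or> u2 \<noteq> 0)" "(v1 \<noteq> 0 \<or> v2 \<noteq> 0)" "(u1 \<noteq> v1 \<or> u2 \<noteq> v2)"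
  shows "\<exists>t<4. tet t u1 u2 \<noteq> 0 \<and> tet t v1 v2 = - tet t u1 u2"
proof -
  have "tet 0 u1 u2 = u1" "tet 1 u1 u2 = u2" "tet 2 u1 u2 = u1 + u2" "tet 3 u1 u2 = u1 - u2"
       "tet 0 v1 v2 = v1" "tet 1 v1 v2 = v2" "tet 2 v1 v2 = v1 + v2" "tet 3 v1 v2 = v1 - v2"
    by (simp_all add: tet_def)
  from tetra_disj[OF assms] show ?thesis
  proof (elim disjE)
    assume "u1 \<noteq> 0 \<and> v1 = - u1" then show ?thesis by (intro exI[of _ 0]) (simp add: tet_def)
  next
    assume "u2 \<noteq> 0 \<and> v2 = - u2" then show ?thesis by (intro exI[of _ 1]) (simp add: tet_def)
  next
    assume "u1 + u2 \<noteq> 0 \<and> v1 + v2 = - (u1 + u2)" then show ?thesis by (intro exI[of _ 2]) (simp add: tet_def)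
  next
    assume "u1 - u2 \<noteq> 0 \<and> v1 - v2 = - (u1 - u2)" then show ?thesis by (intro exI[of _ 3]) (simp add: tet_def)
  qed
qed

lemma tet_add: "tet t (x + x') (y + y') = tet t x y + tet t x' y'"
  by (simp add: tet_def algebra_simps)
lemma tet_diff: "tet t (x - x') (y - y') = tet t x y - tet t x' y'"
  by (simp add: tet_def algebra_simps)
lemma tet_smult: "tet t (c * x) (c * y) = c * tet t x y"
  by (simp add: tet_def algebra_simps)
lemma tet_zero: "tet t 0 0 = 0"
  by (simp add: tet_def)

lemma F3_words_card: "finite (F3_words k) \<and> card (F3_words k) = 3 ^ k"
proof -
  have bij: "bij_betw (\<lambda>p. restrict p {..<k}) (F3_words k) (PiE {..<k} (\<lambda>_. UNIV::3 set))"
  proof (rule bij_betw_imageI)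
    show "inj_on (\<lambda>p. restrict p {..<k}) (F3_words k)"
    proof (rule inj_onI)
      fix p q assume p: "p \<in> F3_words k" and q: "q \<in> F3_words k"
        and eq: "restrict p {..<k} = restrict q {..<k}"
      show "p = q"
      proof
        fix i show "p i = q i"
        proof (cases "i < k")
          case True then show ?thesis using fun_cong[OF eq, of i] by simp
        next
          case False then show ?thesis using p q by (simp add: F3_words_def)
        qed
      qed
    qed
    show "(\<lambda>p. restrict p {..<k}) ` F3_words k = PiE {..<k} (\<lambda>_. UNIV)"
    proof
      show "(\<lambda>p. restrict p {..<k}) ` F3_words k \<subseteq> PiE {..<k} (\<lambda>_. UNIV)"
        by (intro image_subsetI restrict_PiE) simp
      show "PiE {..<k} (\<lambda>_. UNIV) \<subseteq> (\<lambda>p. restrict p {..<k}) ` F3_words k"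
      proof
        fix f assume f: "f \<in> PiE {..<k} (\<lambda>_. UNIV::3 set)"
        let ?g = "\<lambda>i. if i < k then f i else 0"
        have "?g \<in> F3_words k" by (simp add: F3_words_def)
        moreover have "restrict ?g {..<k} = f"
          using f by (auto simp: restrict_def fun_eq_iff PiE_def extensional_def)
        ultimately show "f \<in> (\<lambda>p. restrict p {..<k}) ` F3_words k" by (metis (no_types, lifting) image_eqI)
      qed
    qed
  qed
  have "finite (PiE {..<k} (\<lambda>_. UNIV::3 set))" by (simp add: finite_PiE)
  moreover have "card (PiE {..<k} (\<lambda>_. UNIV::3 set)) = 3 ^ k" by (simp add: card_PiE)
  ultimately show ?thesis using bij bij_betw_finite bij_betw_same_card by metis
qed

definition ip :: "nat \<Rightarrow> (nat \<Rightarrow> 3) \<Rightarrow> (nat \<Rightarrow> 3) \<Rightarrow> 3" where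
  "ip k w p = (\<Sum>i<k. w i * p i)"

lemma ip_add2: "ip k w (\<lambda>i. p i + q i) = ip k w p + ip k w q"
  by (simp add: ip_def distrib_left sum.distrib)
lemma ip_diff2: "ip k w (\<lambda>i. p i - q i) = ip k w p - ip k w q"
  by (simp add: ip_def right_diff_distrib sum_subtractf)
lemma ip_smult2: "ip k w (\<lambda>i. c * p i) = c * ip k w p"
  by (simp add: ip_def sum_distrib_left algebra_simps)
lemma ip_neg2: "ip k w (\<lambda>i. - p i) = - ip k w p"
  by (simp add: ip_def sum_negf)
lemma ip_zero2: "ip k w (\<lambda>i. 0) = 0"
  by (simp add: ip_def)
lemma ip_add1: "ip k (\<lambda>i. w i + w' i) p = ip k w p + ip k w' p"
  by (simp add: ip_def distrib_right sum.distrib)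
lemma ip_diff1: "ip k (\<lambda>i. w i - w' i) p = ip k w p - ip k w' p"
  by (simp add: ip_def left_diff_distrib sum_subtractf)

lemma ip_supp:
  assumes "i \<noteq> j" "i < k" "j < k"
  shows "ip k (\<lambda>l. if l = i then x else if l = j then y else 0) p = x * p i + y * p j"
proof -
  have "ip k (\<lambda>l. if l = i then x else if l = j then y else 0) p
      = (\<Sum>l<k. (if l = i then x * p i else 0) + (if l = j then y * p j else 0))"
    unfolding ip_def by (rule sum.cong) (use assms in auto)
  also have "\<dots> = x * p i + y * p j" using assms by (simp add: sum.distrib)
  finally show ?thesis .
qed

lemma F3_add: "p \<in> F3_words k \<Longrightarrow> q \<in> F3_words k \<Longrightarrow> (\<lambda>i. p i + q i) \<in> F3_words k"
  by (simp add: F3_words_def)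
lemma F3_diff: "p \<in> F3_words k \<Longrightarrow> q \<in> F3_words k \<Longrightarrow> (\<lambda>i. p i - q i) \<in> F3_words k"
  by (simp add: F3_words_def)
lemma F3_smult: "p \<in> F3_words k \<Longrightarrow> (\<lambda>i. c * p i) \<in> F3_words k"
  by (simp add: F3_words_def)
lemma F3_neg: "p \<in> F3_words k \<Longrightarrow> (\<lambda>i. - p i) \<in> F3_words k"
  by (simp add: F3_words_def)
lemma F3_zero: "(\<lambda>i. 0) \<in> F3_words k"
  by (simp add: F3_words_def)

definition indep :: "nat \<Rightarrow> (nat \<Rightarrow> 3) \<Rightarrow> (nat \<Rightarrow> 3) \<Rightarrow> bool" where
  "indep k a b \<longleftrightarrow> (\<exists>i<k. \<exists>j<k. a i * b j \<noteq> a j * b i)"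

definition phi :: "nat \<Rightarrow> (nat \<Rightarrow> 3) \<Rightarrow> (nat \<Rightarrow> 3) \<Rightarrow> (nat \<Rightarrow> 3) \<Rightarrow> 3 \<times> 3" where
  "phi k a b A = (ip k A a, ip k A b)"

definition fib :: "nat \<Rightarrow> (nat \<Rightarrow> 3) \<Rightarrow> (nat \<Rightarrow> 3) \<Rightarrow> 3 \<times> 3 \<Rightarrow> (nat \<Rightarrow> 3) set" where
  "fib k a b s = {A \<in> F3_words k. phi k a b A = s}"

lemma phi_surj:
  assumes "indep k a b"
  shows "\<exists>A\<in>F3_words k. phi k a b A = s"
proof -
  obtain i j where ij: "i < k" "j < k" "a i * b j \<noteq> a j * b i"
    using assms by (auto simp: indep_def)
  have "i \<noteq> j" using ij by (auto simp: mult.commute)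
  obtain s1 s2 where s: "s = (s1, s2)" by (cases s)
  define d where "d = a i * b j - a j * b i"
  have d: "d * d = 1" using ij(3) by (intro nz_sq) (simp add: d_def)
  define x where "x = d * (s1 * b j - s2 * a j)"
  define y where "y = d * (s2 * a i - s1 * b i)"
  define A where "A = (\<lambda>l. if l = i then x else if l = j then y else 0)"
  have A: "A \<in> F3_words k" using ij by (auto simp: A_def F3_words_def)
  have "ip k A a = x * a i + y * a j" unfolding A_def by (rule ip_supp) (use ij \<open>i \<noteq> j\<close> in auto)
  also have "\<dots> = (d * d) * s1" by (simp add: x_def y_def d_def algebra_simps)
  finally have 1: "ip k A a = s1" using d by simp
  have "ip k A b = x * b i + y * b j" unfolding A_def by (rule ip_supp) (use ij \<open>i \<noteq> j\<close> in auto)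
  also have "\<dots> = (d * d) * s2" by (simp add: x_def y_def d_def algebra_simps)
  finally have 2: "ip k A b = s2" using d by simp
  show ?thesis using A 1 2 s by (auto simp: phi_def)
qed

lemma fib_card_eq:
  assumes "indep k a b"
  shows "card (fib k a b s) = card (fib k a b (0,0))"
proof -
  obtain A0 where A0: "A0 \<in> F3_words k" "phi k a b A0 = s" using phi_surj[OF assms] by blast
  have "bij_betw (\<lambda>A l. A l + A0 l) (fib k a b (0,0)) (fib k a b s)"
  proof (rule bij_betw_byWitness[where f' = "\<lambda>A l. A l - A0 l"])
    show "\<forall>A\<in>fib k a b (0, 0). (\<lambda>l. A l + A0 l - A0 l) = A" by simp
    show "\<forall>A\<in>fib k a b s. (\<lambda>l. A l - A0 l + A0 l) = A" by simp
    show "(\<lambda>A l. A l + A0 l) ` fib k a b (0, 0) \<subseteq> fib k a b s"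
      using A0 by (auto simp: fib_def phi_def ip_add1 intro: F3_add)
    show "(\<lambda>A l. A l - A0 l) ` fib k a b s \<subseteq> fib k a b (0, 0)"
      using A0 by (auto simp: fib_def phi_def ip_diff1 intro: F3_diff)
  qed
  then show ?thesis by (simp add: bij_betw_same_card)
qed

lemma fib_finite: "finite (fib k a b s)"
  using F3_words_card[of k] by (simp add: fib_def)

lemma card_UNIV33: "card (UNIV :: (3 \<times> 3) set) = 9"
  by (simp flip: UNIV_Times_UNIV add: card_cartesian_product)

lemma fib_total:
  assumes "indep k a b"
  shows "9 * card (fib k a b (0,0)) = 3 ^ k"
proof -
  have "F3_words k = (\<Union>s\<in>UNIV. fib k a b s)" by (auto simp: fib_def)
  moreover have "card (\<Union>s\<in>UNIV. fib k a b s) = (\<Sum>s\<in>UNIV. card (fib k a b s))"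
    by (rule card_UN_disjoint) (simp_all add: fib_finite, auto simp: fib_def)
  ultimately have "card (F3_words k) = (\<Sum>s\<in>UNIV. card (fib k a b s))" by simp
  also have "\<dots> = (\<Sum>s\<in>(UNIV::(3\<times>3) set). card (fib k a b (0,0)))"
    by (intro sum.cong refl) (metis fib_card_eq[OF assms])
  also have "\<dots> = 9 * card (fib k a b (0,0))" by (simp add: card_UNIV33)
  finally show ?thesis using F3_words_card[of k] by simp
qed

lemma sum_fib:
  fixes H :: "3 \<times> 3 \<Rightarrow> nat"
  assumes "indep k a b"
  shows "(\<Sum>A\<in>F3_words k. H (phi k a b A)) = card (fib k a b (0,0)) * (\<Sum>s\<in>UNIV. H s)"
proof -
  have "(\<Sum>A\<in>F3_words k. H (phi k a b A))
      = (\<Sum>s\<in>UNIV. \<Sum>A\<in>{A. A \<in> F3_words k \<and> phi k a b A = s}. H (phi k a b A))"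
    using F3_words_card[of k] by (intro sum.group[symmetric]) auto
  also have "\<dots> = (\<Sum>s\<in>UNIV. card (fib k a b s) * H s)"
  proof (intro sum.cong refl)
    fix s
    have "(\<Sum>A\<in>{A. A \<in> F3_words k \<and> phi k a b A = s}. H (phi k a b A))
        = (\<Sum>A\<in>fib k a b s. H s)" by (rule sum.cong) (auto simp: fib_def)
    then show "(\<Sum>A\<in>{A. A \<in> F3_words k \<and> phi k a b A = s}. H (phi k a b A)) = card (fib k a b s) * H s"
      by simp
  qed
  also have "\<dots> = (\<Sum>s\<in>UNIV. card (fib k a b (0,0)) * H s)"
    by (intro sum.cong refl) (metis fib_card_eq[OF assms])
  finally show ?thesis by (simp add: sum_distrib_left)
qed

definition gb :: "3 \<times> 3 \<Rightarrow> 3 \<times> 3 \<Rightarrow> bool" where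
  "gb s t \<longleftrightarrow> (fst s = 0 \<and> fst t = 0) \<or> (snd s = 0 \<and> snd t = 0) \<or> (fst s = snd s \<and> fst t = snd t)"

definition blockbad :: "nat \<Rightarrow> (nat \<Rightarrow> 3) \<Rightarrow> (nat \<Rightarrow> 3) \<Rightarrow> (nat \<Rightarrow> 3) \<times> (nat \<Rightarrow> 3) \<Rightarrow> bool" where
  "blockbad k a b AB \<longleftrightarrow> gb (phi k a b (fst AB)) (phi k a b (snd AB))"

lemma UNIV3: "(UNIV :: 3 set) = {0, 1, 2}" using three_cases by auto

lemma sum_UNIV33: "(\<Sum>s\<in>(UNIV :: (3 \<times> 3) set). g s) = (\<Sum>x\<in>{0,1,2::3}. \<Sum>y\<in>{0,1,2::3}. g (x, y))"
proof -
  have eq: "(UNIV :: (3 \<times> 3) set) = {0,1,2::3} \<times> {0,1,2::3}" by (simp flip: UNIV_Times_UNIV add: UNIV3)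
  show ?thesis by (simp only: eq sum.cartesian_product case_prod_eta)
qed

lemma gb_count: "(\<Sum>s\<in>UNIV. \<Sum>t\<in>UNIV. if gb s t then 1 else 0) = (25::nat)"
  by (simp add: sum_UNIV33 gb_def)

lemma card_filter: "finite S \<Longrightarrow> card {x\<in>S. P x} = (\<Sum>x\<in>S. if P x then 1 else 0)"
  by (simp add: sum.inter_filter[symmetric])

lemma block_count:
  assumes "indep k a b"
  shows "card {AB \<in> F3_words k \<times> F3_words k. blockbad k a b AB} = 25 * card (fib k a b (0,0))^2"
proof -
  let ?V = "F3_words k" and ?f = "card (fib k a b (0,0))"
  have fin: "finite ?V" using F3_words_card by blast
  let ?G = "\<lambda>s. (\<Sum>t\<in>UNIV. if gb s t then 1 else 0::nat)"
  have "card {AB \<in> ?V \<times> ?V. blockbad k a b AB} = (\<Sum>AB\<in>?V \<times> ?V. if blockbad k a b AB then 1 else 0)"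
    using fin by (simp add: card_filter)
  also have "\<dots> = (\<Sum>A\<in>?V. \<Sum>B\<in>?V. if gb (phi k a b A) (phi k a b B) then 1 else 0)"
    by (simp add: sum.cartesian_product blockbad_def case_prod_beta)
  also have "\<dots> = (\<Sum>A\<in>?V. ?f * ?G (phi k a b A))"
  proof (rule sum.cong[OF refl])
    fix A
    show "(\<Sum>B\<in>?V. if gb (phi k a b A) (phi k a b B) then 1 else 0) = ?f * ?G (phi k a b A)"
      using sum_fib[OF assms, of "\<lambda>t. if gb (phi k a b A) t then 1 else 0"] by simp
  qed
  also have "\<dots> = ?f * (\<Sum>A\<in>?V. ?G (phi k a b A))"
    by (simp add: sum_distrib_left)
  also have "\<dots> = ?f * (?f * (\<Sum>s\<in>UNIV. ?G s))"
    using sum_fib[OF assms, of ?G] by simp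
  also have "\<dots> = 25 * ?f^2" by (simp add: gb_count power2_eq_square)
  finally show ?thesis .
qed

definition Ws :: "nat \<Rightarrow> nat \<Rightarrow> (nat \<Rightarrow> (nat \<Rightarrow> 3) \<times> (nat \<Rightarrow> 3)) set" where
  "Ws k m = PiE {..<m} (\<lambda>_. F3_words k \<times> F3_words k)"

definition bad :: "nat \<Rightarrow> nat \<Rightarrow> (nat \<Rightarrow> (nat \<Rightarrow> 3) \<times> (nat \<Rightarrow> 3)) \<Rightarrow> (nat \<Rightarrow> 3) \<Rightarrow> (nat \<Rightarrow> 3) \<Rightarrow> bool" where
  "bad k m W a b \<longleftrightarrow> (\<forall>j<m. blockbad k a b (W j))"

lemma Ws_card: "card (Ws k m) = (9 ^ k) ^ m \<and> finite (Ws k m)"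
proof -
  have "card (F3_words k \<times> F3_words k) = 9 ^ k"
    using F3_words_card[of k] by (simp add: card_cartesian_product flip: power_mult_distrib)
  then show ?thesis using F3_words_card[of k] by (simp add: Ws_def card_PiE finite_PiE)
qed

lemma bad_count:
  assumes "indep k a b"
  shows "card {W \<in> Ws k m. bad k m W a b} * 81 ^ m = 25 ^ m * (9 ^ k) ^ m"
proof -
  have "{W \<in> Ws k m. bad k m W a b} = PiE {..<m} (\<lambda>_. {AB \<in> F3_words k \<times> F3_words k. blockbad k a b AB})"
  proof (rule set_eqI)
    fix W
    show "W \<in> {W \<in> Ws k m. bad k m W a b} \<longleftrightarrow> W \<in> PiE {..<m} (\<lambda>_. {AB \<in> F3_words k \<times> F3_words k. blockbad k a b AB})"
      unfolding Ws_def bad_def PiE_iff lessThan_iff mem_Collect_eq by blast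
  qed
  then have "card {W \<in> Ws k m. bad k m W a b} = (25 * card (fib k a b (0,0))^2) ^ m"
    by (simp add: card_PiE block_count[OF assms])
  moreover have "81 * card (fib k a b (0,0))^2 = 9 ^ k"
  proof -
    have "81 * card (fib k a b (0,0))^2 = (9 * card (fib k a b (0,0)))^2"
      by (simp add: power_mult_distrib)
    also have "\<dots> = ((3::nat) ^ k)^2" by (simp add: fib_total[OF assms])
    also have "\<dots> = (3^2)^k" by (metis power_mult mult.commute)
    finally show ?thesis by simp
  qed
  ultimately show ?thesis
  proof -
    assume c: "card {W \<in> Ws k m. bad k m W a b} = (25 * card (fib k a b (0,0))^2) ^ m"
      and e: "81 * card (fib k a b (0,0))^2 = 9 ^ k"
    have "card {W \<in> Ws k m. bad k m W a b} * 81 ^ m = (25 * (81 * card (fib k a b (0,0))^2)) ^ m"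
      unfolding c by (simp only: power_mult_distrib ac_simps)
    also have "\<dots> = 25 ^ m * (9 ^ k) ^ m" unfolding e by (simp add: power_mult_distrib)
    finally show ?thesis .
  qed
qed

lemma neg0: "(x::3) = - x \<Longrightarrow> x = 0"
  by (cases x rule: three_exhaust) auto

lemma indep_distinct:
  assumes "indep k a b"
  shows "a \<noteq> b" "a \<noteq> (\<lambda>l. - a l)" "a \<noteq> (\<lambda>l. - b l)" "b \<noteq> (\<lambda>l. - b l)"
proof -
  obtain i j where ij: "a i * b j \<noteq> a j * b i" using assms by (auto simp: indep_def)
  show "a \<noteq> b" using ij by (auto simp: mult.commute)
  show "a \<noteq> (\<lambda>l. - a l)"
  proof
    assume "a = (\<lambda>l. - a l)"
    then have "\<And>l. a l = 0" by (metis neg0)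
    then show False using ij by simp
  qed
  show "a \<noteq> (\<lambda>l. - b l)" using ij by (auto simp: mult.commute)
  show "b \<noteq> (\<lambda>l. - b l)"
  proof
    assume "b = (\<lambda>l. - b l)"
    then have "\<And>l. b l = 0" by (metis neg0)
    then show False using ij by simp
  qed
qed

lemma indep_swap: "indep k a b \<Longrightarrow> indep k b a"
  unfolding indep_def by (metis mult.commute)

lemma indep_neg: "indep k a b \<Longrightarrow> indep k (\<lambda>l. - a l) (\<lambda>l. - b l)"
  unfolding indep_def by simp

lemma bad_swap: "bad k m W a b \<Longrightarrow> bad k m W b a"
  unfolding bad_def blockbad_def phi_def gb_def by auto

lemma bad_neg: "bad k m W a b \<Longrightarrow> bad k m W (\<lambda>l. - a l) (\<lambda>l. - b l)"
  unfolding bad_def blockbad_def phi_def gb_def by (simp add: ip_neg2)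

definition Pairs :: "nat \<Rightarrow> ((nat \<Rightarrow> 3) \<times> (nat \<Rightarrow> 3)) set" where
  "Pairs k = {x \<in> F3_words k \<times> F3_words k. indep k (fst x) (snd x)}"

lemma Pairs_fin: "finite (Pairs k) \<and> card (Pairs k) \<le> 9 ^ k"
proof -
  have fin: "finite (F3_words k \<times> F3_words k)" using F3_words_card by blast
  have "card (F3_words k \<times> F3_words k) = 9 ^ k"
    using F3_words_card[of k] by (simp add: card_cartesian_product flip: power_mult_distrib)
  moreover have "Pairs k \<subseteq> F3_words k \<times> F3_words k" by (auto simp: Pairs_def)
  ultimately show ?thesis using fin card_mono[OF fin] finite_subset by auto
qed

lemma orbit:
  assumes "x \<in> Pairs k" "bad k m W (fst x) (snd x)"
  shows "4 \<le> card {y \<in> Pairs k. bad k m W (fst y) (snd y)}"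
proof -
  obtain a b where x: "x = (a, b)" by (cases x)
  have ab: "a \<in> F3_words k" "b \<in> F3_words k" "indep k a b" using assms(1) x by (auto simp: Pairs_def)
  have bd: "bad k m W a b" using assms(2) x by simp
  let ?na = "\<lambda>l. - a l" and ?nb = "\<lambda>l. - b l"
  have sub: "{(a,b), (b,a), (?na,?nb), (?nb,?na)} \<subseteq> {y \<in> Pairs k. bad k m W (fst y) (snd y)}"
    using ab bd by (auto simp: Pairs_def indep_swap indep_neg bad_swap bad_neg F3_neg)
  have d: "a \<noteq> b" "a \<noteq> ?na" "a \<noteq> ?nb" "b \<noteq> ?nb" using indep_distinct[OF ab(3)] by auto
  have d2: "b \<noteq> ?na" using d(3) by (auto simp: fun_eq_iff) (metis minus_minus)
  have d3: "?na \<noteq> ?nb" using d(1) by (auto simp: fun_eq_iff)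
  have "card {(a,b), (b,a), (?na,?nb), (?nb,?na)} = 4"
    using d d2 d3 by auto
  moreover have "finite {y \<in> Pairs k. bad k m W (fst y) (snd y)}" using Pairs_fin by auto
  ultimately show ?thesis using card_mono[OF _ sub] by simp
qed

lemma exists_good:
  assumes lt: "(9::nat) ^ k * 25 ^ m < 4 * 81 ^ m"
  shows "\<exists>W\<in>Ws k m. \<forall>a\<in>F3_words k. \<forall>b\<in>F3_words k. indep k a b \<longrightarrow> \<not> bad k m W a b"
proof (rule ccontr)
  assume "\<not> ?thesis"
  then have allbad: "\<forall>W\<in>Ws k m. \<exists>x\<in>Pairs k. bad k m W (fst x) (snd x)"
    by (fastforce simp: Pairs_def)
  let ?P = "Pairs k" and ?W = "Ws k m"
  have finP: "finite ?P" and cP: "card ?P \<le> 9 ^ k" using Pairs_fin by auto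
  have finW: "finite ?W" and cW: "card ?W = (9 ^ k) ^ m" using Ws_card by auto
  have 1: "card ?W * 4 \<le> (\<Sum>W\<in>?W. card {x \<in> ?P. bad k m W (fst x) (snd x)})"
  proof -
    have "\<And>W. W \<in> ?W \<Longrightarrow> 4 \<le> card {x \<in> ?P. bad k m W (fst x) (snd x)}"
      using allbad orbit by blast
    then have "of_nat (card ?W) * 4 \<le> (\<Sum>W\<in>?W. card {x \<in> ?P. bad k m W (fst x) (snd x)})"
      by (rule sum_bounded_below)
    then show ?thesis by simp
  qed
  have 2: "(\<Sum>W\<in>?W. card {x \<in> ?P. bad k m W (fst x) (snd x)})
        = (\<Sum>x\<in>?P. card {W \<in> ?W. bad k m W (fst x) (snd x)})"
  proof -
    have "(\<Sum>W\<in>?W. card {x \<in> ?P. bad k m W (fst x) (snd x)})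
        = (\<Sum>W\<in>?W. \<Sum>x\<in>?P. if bad k m W (fst x) (snd x) then 1 else 0)"
      by (rule sum.cong[OF refl]) (rule card_filter[OF finP])
    also have "\<dots> = (\<Sum>x\<in>?P. \<Sum>W\<in>?W. if bad k m W (fst x) (snd x) then 1 else 0)"
      by (rule sum.swap)
    also have "\<dots> = (\<Sum>x\<in>?P. card {W \<in> ?W. bad k m W (fst x) (snd x)})"
      by (rule sum.cong[OF refl]) (rule card_filter[OF finW, symmetric])
    finally show ?thesis .
  qed
  have 3: "(\<Sum>x\<in>?P. card {W \<in> ?W. bad k m W (fst x) (snd x)}) * 81 ^ m = card ?P * (25 ^ m * (9 ^ k) ^ m)"
  proof -
    have "(\<Sum>x\<in>?P. card {W \<in> ?W. bad k m W (fst x) (snd x)}) * 81 ^ m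
        = (\<Sum>x\<in>?P. card {W \<in> ?W. bad k m W (fst x) (snd x)} * 81 ^ m)"
      by (rule sum_distrib_right)
    also have "\<dots> = (\<Sum>x\<in>?P. 25 ^ m * (9 ^ k) ^ m)"
      by (rule sum.cong[OF refl]) (rule bad_count, auto simp: Pairs_def)
    also have "\<dots> = card ?P * (25 ^ m * (9 ^ k) ^ m)" by (simp only: sum_constant of_nat_id)
    finally show ?thesis .
  qed
  have A: "card ?W * 4 * 81 ^ m \<le> card ?P * (25 ^ m * (9 ^ k) ^ m)"
    using mult_le_mono1[OF 1, of "81 ^ m"] unfolding 2 3 .
  have key: "\<And>X Y Z T c p::nat. c = X \<Longrightarrow> p \<le> T \<Longrightarrow> c * 4 * Y \<le> p * (Z * X) \<Longrightarrow> 0 < X \<Longrightarrow> 4 * Y \<le> T * Z"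
  proof -
    fix X Y Z T c p :: nat
    assume h: "c = X" "p \<le> T" "c * 4 * Y \<le> p * (Z * X)" "0 < X"
    have "X * (4 * Y) = c * 4 * Y" using h(1) by (simp add: ac_simps)
    also have "\<dots> \<le> p * (Z * X)" by (rule h(3))
    also have "\<dots> \<le> T * (Z * X)" using h(2) by (rule mult_le_mono1)
    also have "\<dots> = X * (T * Z)" by (simp add: ac_simps)
    finally show "4 * Y \<le> T * Z" using h(4) by (simp only: mult_le_cancel1)
  qed
  have pos: "0 < ((9::nat) ^ k) ^ m" by simp
  have "4 * 81 ^ m \<le> (9::nat) ^ k * 25 ^ m"
    by (rule key[OF cW cP A pos])
  then show False using lt by simp
qed

definition enc :: "nat \<Rightarrow> nat \<Rightarrow> (nat \<Rightarrow> (nat \<Rightarrow> 3) \<times> (nat \<Rightarrow> 3)) \<Rightarrow> (nat \<Rightarrow> 3) \<Rightarrow> nat \<Rightarrow> 3" where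
  "enc k m W p i = (if i < 4 * m then tet (i mod 4) (ip k (fst (W (i div 4))) p) (ip k (snd (W (i div 4))) p) else 0)"

definition good :: "nat \<Rightarrow> nat \<Rightarrow> (nat \<Rightarrow> (nat \<Rightarrow> 3) \<times> (nat \<Rightarrow> 3)) \<Rightarrow> bool" where
  "good k m W \<longleftrightarrow> (\<forall>a\<in>F3_words k. \<forall>b\<in>F3_words k. indep k a b \<longrightarrow> \<not> bad k m W a b)"

lemma enc_diff: "enc k m W (\<lambda>l. p l - q l) i = enc k m W p i - enc k m W q i"
  by (simp add: enc_def ip_diff2 tet_diff)
lemma enc_add: "enc k m W (\<lambda>l. p l + q l) i = enc k m W p i + enc k m W q i"
  by (simp add: enc_def ip_add2 tet_add)
lemma enc_smult: "enc k m W (\<lambda>l. c * p l) i = c * enc k m W p i"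
  by (simp add: enc_def ip_smult2 tet_smult)
lemma enc_zero: "enc k m W (\<lambda>l. 0) = (\<lambda>i. 0)"
  by (simp add: enc_def ip_zero2 tet_zero fun_eq_iff)
lemma enc_block: "j < m \<Longrightarrow> t < 4 \<Longrightarrow> enc k m W p (4 * j + t) = tet t (ip k (fst (W j)) p) (ip k (snd (W j)) p)"
  by (simp add: enc_def)

lemma gb2: "gb (x, 2 * x) (y, 2 * y) \<Longrightarrow> x = 0 \<and> (y::3) = 0"
  unfolding gb_def by (cases x rule: three_exhaust; cases y rule: three_exhaust) simp_all

lemma killall:
  assumes k: "2 \<le> k" and g: "good k m W" and a: "a \<in> F3_words k"
    and z: "\<forall>j<m. ip k (fst (W j)) a = 0 \<and> ip k (snd (W j)) a = 0"
  shows "a = (\<lambda>l. 0)"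
proof (rule ccontr)
  assume "a \<noteq> (\<lambda>l. 0)"
  then obtain i where i: "a i \<noteq> 0" by auto
  then have ik: "i < k" using a by (auto simp: F3_words_def) (meson not_le)
  define j where "j = (if i = 0 then 1 else (0::nat))"
  have jk: "j < k" "j \<noteq> i" using k by (auto simp: j_def)
  define e where "e = (\<lambda>l. if l = j then 1 else (0::3))"
  have e: "e \<in> F3_words k" using jk by (auto simp: e_def F3_words_def)
  have "indep k a e" unfolding indep_def
    by (rule exI[of _ i], rule conjI[OF ik], rule exI[of _ j]) (use jk i in \<open>auto simp: e_def\<close>)
  moreover have "bad k m W a e"
    using z by (auto simp: bad_def blockbad_def phi_def gb_def)
  ultimately show False using g a e by (auto simp: good_def)
qed

lemma enc_inj:
  assumes k: "2 \<le> k" and g: "good k m W"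
  shows "inj_on (enc k m W) (F3_words k)"
proof (rule inj_onI)
  fix p q assume p: "p \<in> F3_words k" and q: "q \<in> F3_words k" and eq: "enc k m W p = enc k m W q"
  let ?d = "\<lambda>l. p l - q l"
  have d: "?d \<in> F3_words k" using p q by (rule F3_diff)
  have "\<forall>j<m. ip k (fst (W j)) ?d = 0 \<and> ip k (snd (W j)) ?d = 0"
  proof (intro allI impI)
    fix j assume j: "j < m"
    have "enc k m W ?d (4 * j + 0) = 0" "enc k m W ?d (4 * j + 1) = 0"
      using eq by (simp_all add: enc_diff)
    then show "ip k (fst (W j)) ?d = 0 \<and> ip k (snd (W j)) ?d = 0"
      using enc_block[OF j, of 0 k W ?d] enc_block[OF j, of 1 k W ?d] by (simp add: tet_def)
  qed
  then have "?d = (\<lambda>l. 0)" by (rule killall[OF k g d])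
  then show "p = q" by (auto simp: fun_eq_iff dest: fun_cong)
qed

lemma enc_lin:
  assumes "4 * m \<le> n"
  shows "linear_code n (enc k m W ` F3_words k)"
  unfolding linear_code_def
proof (intro conjI ballI allI)
  show "enc k m W ` F3_words k \<subseteq> F3_words n"
    using assms by (auto simp: F3_words_def enc_def)
  show "(\<lambda>i. 0) \<in> enc k m W ` F3_words k"
    using F3_zero[of k] enc_zero[of k m W] by (metis image_eqI)
next
  fix x y assume "x \<in> enc k m W ` F3_words k" "y \<in> enc k m W ` F3_words k"
  then obtain p q where p: "p \<in> F3_words k" "x = enc k m W p" and q: "q \<in> F3_words k" "y = enc k m W q"
    by auto
  have "(\<lambda>i. x i + y i) = enc k m W (\<lambda>l. p l + q l)" using p q by (simp add: enc_add fun_eq_iff)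
  then show "(\<lambda>i. x i + y i) \<in> enc k m W ` F3_words k" using F3_add[OF p(1) q(1)] by simp
next
  fix c :: 3 and x assume "x \<in> enc k m W ` F3_words k"
  then obtain p where p: "p \<in> F3_words k" "x = enc k m W p" by auto
  have "(\<lambda>i. c * x i) = enc k m W (\<lambda>l. c * p l)" using p by (simp add: enc_smult fun_eq_iff)
  then show "(\<lambda>i. c * x i) \<in> enc k m W ` F3_words k" using F3_smult[OF p(1)] by simp
qed

lemma enc_trif:
  assumes k: "2 \<le> k" and g: "good k m W" and n: "4 * m \<le> n"
  shows "trifferent n (enc k m W ` F3_words k)"
  unfolding trifferent_def
proof (intro ballI impI)
  fix x y z assume xC: "x \<in> enc k m W ` F3_words k" and yC: "y \<in> enc k m W ` F3_words k"
    and zC: "z \<in> enc k m W ` F3_words k" and dist: "x \<noteq> y \<and> y \<noteq> z \<and> x \<noteq> z"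
  obtain p where p: "p \<in> F3_words k" "x = enc k m W p" using xC by auto
  obtain q where q: "q \<in> F3_words k" "y = enc k m W q" using yC by auto
  obtain s where s: "s \<in> F3_words k" "z = enc k m W s" using zC by auto
  define a where "a = (\<lambda>l. q l - p l)"
  define b where "b = (\<lambda>l. s l - p l)"
  have aV: "a \<in> F3_words k" unfolding a_def by (rule F3_diff[OF q(1) p(1)])
  have bV: "b \<in> F3_words k" unfolding b_def by (rule F3_diff[OF s(1) p(1)])
  have ea: "\<And>i. enc k m W a i = y i - x i" using p q by (simp add: a_def enc_diff)
  have eb: "\<And>i. enc k m W b i = z i - x i" using p s by (simp add: b_def enc_diff)
  have a0: "a \<noteq> (\<lambda>l. 0)"
  proof
    assume "a = (\<lambda>l. 0)"
    then have "q = p" by (auto simp: a_def fun_eq_iff dest: fun_cong)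
    then show False using dist p q by simp
  qed
  have b0: "b \<noteq> (\<lambda>l. 0)"
  proof
    assume "b = (\<lambda>l. 0)"
    then have "s = p" by (auto simp: b_def fun_eq_iff dest: fun_cong)
    then show False using dist p s by simp
  qed
  have ab: "a \<noteq> b"
  proof
    assume "a = b"
    then have "q = s" by (auto simp: a_def b_def fun_eq_iff dest: fun_cong)
    then show False using dist q s by simp
  qed
  have "\<exists>j<m. \<not> blockbad k a b (W j)"
  proof (rule ccontr)
    assume "\<not> ?thesis"
    then have bd: "bad k m W a b" by (auto simp: bad_def)
    show False
    proof (cases "indep k a b")
      case True then show False using g aV bV bd by (auto simp: good_def)
    next
      case False
      obtain i0 where i0: "a i0 \<noteq> 0" using a0 by auto
      then have i0k: "i0 < k" using aV by (auto simp: F3_words_def) (meson not_le)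
      define c where "c = b i0 * a i0"
      have bc: "b = (\<lambda>l. c * a l)"
      proof
        fix l show "b l = c * a l"
        proof (cases "l < k")
          case True
          then have "a i0 * b l = a l * b i0" using False i0k by (auto simp: indep_def)
          then have "a i0 * a i0 * b l = a i0 * a l * b i0" by (metis mult.assoc)
          then show ?thesis using nz_sq[OF i0] by (simp add: c_def ac_simps)
        next
          case False then show ?thesis using aV bV by (simp add: F3_words_def)
        qed
      qed
      show False
      proof (cases c rule: three_exhaust)
        case 1 then show False using b0 bc by simp
      next
        case 2 then show False using ab bc by simp
      next
        case 3
        have "\<forall>j<m. ip k (fst (W j)) a = 0 \<and> ip k (snd (W j)) a = 0"
        proof (intro allI impI)
          fix j assume "j < m"
          then have "blockbad k a b (W j)" using bd by (simp add: bad_def)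
          then have "gb (ip k (fst (W j)) a, 2 * ip k (fst (W j)) a) (ip k (snd (W j)) a, 2 * ip k (snd (W j)) a)"
            by (simp add: blockbad_def phi_def bc 3 ip_smult2)
          then show "ip k (fst (W j)) a = 0 \<and> ip k (snd (W j)) a = 0" by (rule gb2)
        qed
        then have "a = (\<lambda>l. 0)" by (rule killall[OF k g aV])
        then show False using a0 by simp
      qed
    qed
  qed
  then obtain j where j: "j < m" "\<not> blockbad k a b (W j)" by blast
  define \<alpha> where "\<alpha> = ip k (fst (W j)) a"
  define \<gamma> where "\<gamma> = ip k (snd (W j)) a"
  define \<beta> where "\<beta> = ip k (fst (W j)) b"
  define \<delta> where "\<delta> = ip k (snd (W j)) b"
  have ng: "\<not> gb (\<alpha>, \<beta>) (\<gamma>, \<delta>)" using j(2) by (simp add: blockbad_def phi_def \<alpha>_def \<beta>_def \<gamma>_def \<delta>_def)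
  have "(\<alpha> \<noteq> 0 \<or> \<gamma> \<noteq> 0)" "(\<beta> \<noteq> 0 \<or> \<delta> \<noteq> 0)" "(\<alpha> \<noteq> \<beta> \<or> \<gamma> \<noteq> \<delta>)"
    using ng by (auto simp: gb_def)
  from tetra[OF this] obtain t where t: "t < 4" "tet t \<alpha> \<gamma> \<noteq> 0" "tet t \<beta> \<delta> = - tet t \<alpha> \<gamma>"
    by blast
  define i where "i = 4 * j + t"
  have i_n: "i < n" using j(1) t(1) n by (simp add: i_def)
  have "enc k m W a i = tet t \<alpha> \<gamma>" unfolding i_def \<alpha>_def \<gamma>_def by (rule enc_block[OF j(1) t(1)])
  then have yi: "y i = x i + tet t \<alpha> \<gamma>" using ea[of i] by (simp add: algebra_simps)
  have "enc k m W b i = tet t \<beta> \<delta>" unfolding i_def \<beta>_def \<delta>_def by (rule enc_block[OF j(1) t(1)])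
  then have zi: "z i = x i - tet t \<alpha> \<gamma>" using eb[of i] t(3) by (simp add: algebra_simps)
  have "{x i, y i, z i} = UNIV" unfolding yi zi by (rule univ3[OF t(2)])
  then show "\<exists>i<n. {x i, y i, z i} = UNIV" using i_n by blast
qed

theorem theorem1p6:
  shows "\<exists>N::nat. \<forall>n\<ge>N. \<exists>C. linear_trifferent_code n C \<and>
           real (card C) \<ge> (1/3) * (9/5) powr (real n / 4)"
proof (rule exI[of _ 12], intro allI impI)
  fix n :: nat assume nN: "12 \<le> n"
  define m where "m = n div 4"
  have m3: "3 \<le> m" using nN by (simp add: m_def)
  have nm: "4 * m \<le> n" by (simp add: m_def)
  have nm2: "real n / 4 \<le> real m + 1"
  proof -
    have "n < 4 * (m + 1)" by (simp add: m_def)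
    then show ?thesis by simp
  qed
  define Q where "Q = (9/5::real) ^ m"
  have Q1: "1 \<le> Q" by (simp add: Q_def)
  have Q3: "(9/5::real) ^ 3 \<le> Q" unfolding Q_def by (rule power_increasing[OF m3]) simp
  have ex: "\<exists>k. 2 * Q \<le> (3::real) ^ (k + 1)"
  proof -
    obtain n0 where "2 * Q < (3::real) ^ n0" using real_arch_pow[of 3 "2 * Q"] by auto
    moreover have "(3::real) ^ n0 \<le> 3 ^ (n0 + 1)" by (rule power_increasing) simp_all
    ultimately have "2 * Q \<le> (3::real) ^ (n0 + 1)" by linarith
    then show ?thesis by blast
  qed
  define k where "k = (LEAST k. 2 * Q \<le> (3::real) ^ (k + 1))"
  have hk1: "2 * Q \<le> (3::real) ^ (k + 1)" unfolding k_def by (rule LeastI_ex[OF ex])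
  have hk2: "(3::real) ^ k < 2 * Q"
  proof (cases k)
    case 0 then show ?thesis using Q1 by simp
  next
    case (Suc k')
    then have "k' < k" by simp
    then have "\<not> 2 * Q \<le> (3::real) ^ (k' + 1)" unfolding k_def by (rule not_less_Least)
    then show ?thesis using Suc by simp
  qed
  have k2: "2 \<le> k"
  proof (rule ccontr)
    assume "\<not> 2 \<le> k"
    then have "k + 1 \<le> 2" by simp
    then have "(3::real) ^ (k + 1) \<le> 3 ^ 2" by (rule power_increasing) simp
    then have "(3::real) ^ (k + 1) \<le> 9" by simp
    moreover have "(9/5::real) ^ 3 = 729/125" by (simp add: power3_eq_cube)
    ultimately show False using hk1 Q3 by linarith
  qed
  have lt: "(9::nat) ^ k * 25 ^ m < 4 * 81 ^ m"
  proof -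
    have "((3::real) ^ k) ^ 2 < (2 * Q) ^ 2" by (rule power_strict_mono[OF hk2]) simp_all
    also have "(2 * Q) ^ 2 = 4 * ((81/25::real) ^ m)"
    proof -
      have "((9/5::real) ^ m) ^ 2 = ((9/5) ^ 2) ^ m" by (metis power_mult mult.commute)
      also have "(9/5::real) ^ 2 = 81/25" by (simp add: power2_eq_square)
      finally show ?thesis by (simp add: Q_def power_mult_distrib)
    qed
    also have "((3::real) ^ k) ^ 2 = (3 ^ 2) ^ k" by (metis power_mult mult.commute)
    finally have "(9::real) ^ k < 4 * (81/25) ^ m" by simp
    then have "(9::real) ^ k * 25 ^ m < 4 * (81/25) ^ m * 25 ^ m" by simp
    also have "\<dots> = 4 * 81 ^ m" by (simp add: power_mult_distrib[symmetric])
    finally have "real (9 ^ k * 25 ^ m) < real (4 * 81 ^ m)" by simp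
    then show ?thesis by (rule of_nat_less_imp_less)
  qed
  obtain W where W: "W \<in> Ws k m" "\<forall>a\<in>F3_words k. \<forall>b\<in>F3_words k. indep k a b \<longrightarrow> \<not> bad k m W a b"
    using exists_good[OF lt] by blast
  have g: "good k m W" using W(2) by (simp add: good_def)
  define C where "C = enc k m W ` F3_words k"
  have lc: "linear_trifferent_code n C"
    unfolding linear_trifferent_code_def C_def using enc_lin[OF nm] enc_trif[OF k2 g nm] by blast
  have cC: "card C = 3 ^ k"
    unfolding C_def using card_image[OF enc_inj[OF k2 g]] F3_words_card[of k] by simp
  have "(9/5::real) powr (real n / 4) \<le> (9/5) powr (real m + 1)"
    by (rule powr_mono[OF nm2]) simp
  also have "\<dots> = (9/5) ^ (m + 1)"
  proof -
    have "real m + 1 = real (m + 1)" by simp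
    then show ?thesis by (simp only:) (rule powr_realpow, simp)
  qed
  also have "\<dots> = 9/5 * Q" by (simp add: Q_def)
  also have "\<dots> \<le> 2 * Q" using Q1 by simp
  also have "\<dots> \<le> 3 * 3 ^ k" using hk1 by simp
  finally have "(1/3) * (9/5::real) powr (real n / 4) \<le> 3 ^ k" by simp
  then show "\<exists>C. linear_trifferent_code n C \<and> real (card C) \<ge> (1/3) * (9/5) powr (real n / 4)"
    using lc cC by (intro exI[of _ C]) simp
qed

end
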